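(* (Height-preserving contraction.) For all $n\geq1$, finite multisets of formulas $\Gamma,\Delta$, every formula $\nu$ and every classical formula $\alpha$: $\vdash^n\Gamma,\nu,\nu\Rightarrow\Delta$ implies $\vdash^n\Gamma,\nu\Rightarrow\Delta$ (left contraction), and $\vdash^n\Gamma\Rightarrow\alpha,\alpha,\Delta$ implies $\vdash^n\Gamma\Rightarrow\alpha,\Delta$ (right contraction for classical formulas).
   Context: Fix a countably infinite set $\mathsf{Prop}$ of propositional variables. Classical formulas are generated by $\alpha ::= p \mid \bot \mid \neg\alpha \mid \alpha\wedge\alpha \mid \alpha\vee\alpha$ with $p\in\mathsf{Prop}$. Formulas are generated by $\phi ::= \alpha \mid \phi\wedge\phi \mid \phi\vee\phi \mid \phi\mathbin{\backslash\!\!/}\phi$ where $\alpha$ is classical ($\vee$: split disjunction, $\mathbin{\backslash\!\!/}$: inquisitive disjunction). A sequent is $\Gamma\Rightarrow\Delta$ with $\Gamma,\Delta$ finite multisets of formulas; "$\Gamma,\Delta$" denotes multiset union. Deep-inference notation: for a formula $\chi$ with a designated occurrence of a subformula not in the scope of any negation, $\chi\{\eta\}$ denotes the result of replacing that occurrence by $\eta$. The cut-free calculus $\mathsf{GT}^-$ ($\alpha$ ranges over classical formulas, $\Lambda$ over multisets of classical formulas): axioms $\Gamma,p\Rightarrow p,\Delta$ and $\Gamma,\bot\Rightarrow\Delta$; (L$\neg$) from $\Gamma\Rightarrow\alpha,\Delta$ infer $\Gamma,\neg\alpha\Rightarrow\Delta$; (R$\neg$) from $\Gamma,\alpha\Rightarrow\Delta$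 infer $\Gamma\Rightarrow\neg\alpha,\Delta$; (L$\wedge$) from $\Gamma,\phi,\psi\Rightarrow\Delta$ infer $\Gamma,\phi\wedge\psi\Rightarrow\Delta$; (R$\wedge$) from $\Gamma\Rightarrow\phi,\Lambda$ and $\Gamma\Rightarrow\psi,\Lambda$ infer $\Gamma\Rightarrow\phi\wedge\psi,\Lambda,\Delta$; (L$\vee$) from $\Gamma,\phi\Rightarrow\Lambda$ and $\Gamma,\psi\Rightarrow\Lambda$ infer $\Gamma,\phi\vee\psi\Rightarrow\Lambda,\Delta$; (R$\vee$) from $\Gamma\Rightarrow\phi,\psi,\Delta$ infer $\Gamma\Rightarrow\phi\vee\psi,\Delta$; (L$\mathbin{\backslash\!\!/}$) from $\Gamma,\chi\{\phi_L\}\Rightarrow\Delta$ and $\Gamma,\chi\{\phi_R\}\Rightarrow\Delta$ infer $\Gamma,\chi\{\phi_L\mathbin{\backslash\!\!/}\phi_R\}\Rightarrow\Delta$; (R$\mathbin{\backslash\!\!/}$) from $\Gamma\Rightarrow\chi\{\phi_i\},\Delta$ ($i\in\{L,R\}$) infer $\Gamma\Rightarrow\chi\{\phi_L\mathbin{\backslash\!\!/}\phi_R\},\Delta$. The height of a derivation consisting of a single axiom is $1$; otherwise it is $1$ plus the maximum height of the subderivations of the premises of its last rule. $\vdash^n\Gamma\Rightarrow\Delta$ means there is a $\mathsf{GT}^-$-derivation of $\Gamma\Rightarrow\Delta$ of height at most $n$. *)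

theory Defs
  imports Main "HOL-Library.Multiset"
begin

text \<open>The single datatype contains all syntax trees; the
predicates classical/wff carve out the classical formulas and the formulas of
the paper (negation only applied to classical formulas).\<close>

datatype fm =
    Atom nat
  | Bot
  | Neg fm
  | Conj fm fm
  | Disj fm fm
  | IDisj fm fm

fun classical :: "fm \<Rightarrow> bool" where
  "classical (Atom p) = True"
| "classical Bot = True"
| "classical (Neg a) = classical a"
| "classical (Conj a b) = (classical a \<and> classical b)"
| "classical (Disj a b) = (classical a \<and> classical b)"
| "classical (IDisj a b) = False"

fun wff :: "fm \<Rightarrow> bool" where
  "wff (Atom p) = True"
| "wff Bot = True"
| "wff (Neg a) = classical a"
| "wff (Conj a b) = (wff a \<and> wff b)"
| "wff (Disj a b) = (wff a \<and> wff b)"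
| "wff (IDisj a b) = (wff a \<and> wff b)"

text \<open>Deep-inference contexts: a formula with one designated hole that is
not in the scope of any negation.\<close>

datatype ctx =
    Hole
  | CConjL ctx fm | CConjR fm ctx
  | CDisjL ctx fm | CDisjR fm ctx
  | CIDisjL ctx fm | CIDisjR fm ctx

fun plug :: "ctx \<Rightarrow> fm \<Rightarrow> fm" where
  "plug Hole e = e"
| "plug (CConjL c f) e = Conj (plug c e) f"
| "plug (CConjR f c) e = Conj f (plug c e)"
| "plug (CDisjL c f) e = Disj (plug c e) f"
| "plug (CDisjR f c) e = Disj f (plug c e)"
| "plug (CIDisjL c f) e = IDisj (plug c e) f"
| "plug (CIDisjR f c) e = IDisj f (plug c e)"

text \<open>derh n \<Gamma> \<Delta>: there is a GT^- derivation of \<Gamma> \<Rightarrow> \<Delta> of height exactly n.\<close>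

inductive derh :: "nat \<Rightarrow> fm multiset \<Rightarrow> fm multiset \<Rightarrow> bool" where
  ax_atom: "derh 1 (add_mset (Atom p) \<Gamma>) (add_mset (Atom p) \<Delta>)"
| ax_bot: "derh 1 (add_mset Bot \<Gamma>) \<Delta>"
| L_neg: "classical a \<Longrightarrow> derh n \<Gamma> (add_mset a \<Delta>) \<Longrightarrow>
           derh (Suc n) (add_mset (Neg a) \<Gamma>) \<Delta>"
| R_neg: "classical a \<Longrightarrow> derh n (add_mset a \<Gamma>) \<Delta> \<Longrightarrow>
           derh (Suc n) \<Gamma> (add_mset (Neg a) \<Delta>)"
| L_conj: "derh n (add_mset f (add_mset g \<Gamma>)) \<Delta> \<Longrightarrow>
           derh (Suc n) (add_mset (Conj f g) \<Gamma>) \<Delta>"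
| R_conj: "\<forall>a\<in>#\<Lambda>. classical a \<Longrightarrow>
           derh n1 \<Gamma> (add_mset f \<Lambda>) \<Longrightarrow> derh n2 \<Gamma> (add_mset g \<Lambda>) \<Longrightarrow>
           derh (Suc (max n1 n2)) \<Gamma> (add_mset (Conj f g) (\<Lambda> + \<Delta>))"
| L_disj: "\<forall>a\<in>#\<Lambda>. classical a \<Longrightarrow>
           derh n1 (add_mset f \<Gamma>) \<Lambda> \<Longrightarrow> derh n2 (add_mset g \<Gamma>) \<Lambda> \<Longrightarrow>
           derh (Suc (max n1 n2)) (add_mset (Disj f g) \<Gamma>) (\<Lambda> + \<Delta>)"
| R_disj: "derh n \<Gamma> (add_mset f (add_mset g \<Delta>)) \<Longrightarrow>
           derh (Suc n) \<Gamma> (add_mset (Disj f g) \<Delta>)"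
| L_idisj: "derh n1 (add_mset (plug c f) \<Gamma>) \<Delta> \<Longrightarrow> derh n2 (add_mset (plug c g) \<Gamma>) \<Delta> \<Longrightarrow>
           derh (Suc (max n1 n2)) (add_mset (plug c (IDisj f g)) \<Gamma>) \<Delta>"
| R_idisjL: "derh n \<Gamma> (add_mset (plug c f) \<Delta>) \<Longrightarrow>
           derh (Suc n) \<Gamma> (add_mset (plug c (IDisj f g)) \<Delta>)"
| R_idisjR: "derh n \<Gamma> (add_mset (plug c g) \<Delta>) \<Longrightarrow>
           derh (Suc n) \<Gamma> (add_mset (plug c (IDisj f g)) \<Delta>)"

definition derivable :: "nat \<Rightarrow> fm multiset \<Rightarrow> fm multiset \<Rightarrow> bool" where
  "derivable n \<Gamma> \<Delta> \<longleftrightarrow> (\<exists>m\<le>n. derh m \<Gamma> \<Delta>)"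

end

theory Submission
  imports Defs
begin

lemma ax1 [intro]: "derh (Suc 0) (add_mset (Atom p) G) (add_mset (Atom p) D)"
  using ax_atom by simp
lemma axb [intro]: "derh (Suc 0) (add_mset Bot G) D"
  using ax_bot by simp

lemma weak: "derh n G D \<Longrightarrow> derh n (G + A) (D + B)"
proof (induction arbitrary: A B rule: derh.induct)
  case (R_conj \<Lambda> n1 \<Gamma> f n2 g \<Delta>)
  then show ?case using derh.R_conj[OF R_conj.hyps(1) R_conj.IH(1)[of A "{#}", simplified] R_conj.IH(2)[of A "{#}", simplified], of "\<Delta>+B"] by (simp add: add.assoc)
next
  case (L_disj \<Lambda> n1 f \<Gamma> n2 g \<Delta>)
  then show ?case using derh.L_disj[OF L_disj.hyps(1) L_disj.IH(1)[of A "{#}", simplified] L_disj.IH(2)[of A "{#}", simplified], of "\<Delta>+B"] by (simp add: add.assoc)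
next
  case (L_idisj n1 c f \<Gamma> \<Delta> n2 g)
  then show ?case using derh.L_idisj[of n1 c f "\<Gamma>+A" "\<Delta>+B" n2 g] by simp
qed (auto intro: derh.intros)

lemma dv_derh: "derh n G D \<Longrightarrow> derivable n G D"
  unfolding derivable_def by blast
lemma dv_mono: "derivable m G D \<Longrightarrow> m \<le> n \<Longrightarrow> derivable n G D"
  unfolding derivable_def using le_trans by blast
lemma dv_weak: "derivable n G D \<Longrightarrow> derivable n (G + A) (D + B)"
  unfolding derivable_def using weak by blast
lemma dv_ax1: "derivable 1 (add_mset (Atom p) G) (add_mset (Atom p) D)"
  by (rule dv_derh) (rule ax_atom)
lemma dv_axb: "derivable 1 (add_mset Bot G) D"
  by (rule dv_derh) (rule ax_bot)
lemma dv_ax1': "derivable (Suc 0) (add_mset (Atom p) G) (add_mset (Atom p) D)"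
  using dv_ax1 by simp
lemma dv_axb': "derivable (Suc 0) (add_mset Bot G) D"
  using dv_axb by simp
lemma dv_derh_le: "derh m G D \<Longrightarrow> m \<le> n \<Longrightarrow> derivable n G D"
  unfolding derivable_def by blast
lemma dv_Lneg: "classical a \<Longrightarrow> derivable n \<Gamma> (add_mset a \<Delta>) \<Longrightarrow> derivable (Suc n) (add_mset (Neg a) \<Gamma>) \<Delta>"
  unfolding derivable_def using L_neg by fastforce
lemma dv_Rneg: "classical a \<Longrightarrow> derivable n (add_mset a \<Gamma>) \<Delta> \<Longrightarrow> derivable (Suc n) \<Gamma> (add_mset (Neg a) \<Delta>)"
  unfolding derivable_def using R_neg by fastforce
lemma dv_Lconj: "derivable n (add_mset f (add_mset g \<Gamma>)) \<Delta> \<Longrightarrow> derivable (Suc n) (add_mset (Conj f g) \<Gamma>) \<Delta>"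
  unfolding derivable_def using L_conj by fastforce
lemma dv_Rdisj: "derivable n \<Gamma> (add_mset f (add_mset g \<Delta>)) \<Longrightarrow> derivable (Suc n) \<Gamma> (add_mset (Disj f g) \<Delta>)"
  unfolding derivable_def using R_disj by fastforce
lemma dv_Rconj: "\<forall>a\<in>#\<Lambda>. classical a \<Longrightarrow> derivable n1 \<Gamma> (add_mset f \<Lambda>) \<Longrightarrow> derivable n2 \<Gamma> (add_mset g \<Lambda>) \<Longrightarrow>
           derivable (Suc (max n1 n2)) \<Gamma> (add_mset (Conj f g) (\<Lambda> + \<Delta>))"
proof -
  assume a: "\<forall>a\<in>#\<Lambda>. classical a" "derivable n1 \<Gamma> (add_mset f \<Lambda>)" "derivable n2 \<Gamma> (add_mset g \<Lambda>)"
  then obtain m1 m2 where "m1 \<le> n1" "m2 \<le> n2" "derh m1 \<Gamma> (add_mset f \<Lambda>)" "derh m2 \<Gamma> (add_mset g \<Lambda>)"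
    unfolding derivable_def by blast
  with a(1) show ?thesis unfolding derivable_def
    by (intro exI[of _ "Suc (max m1 m2)"]) (auto intro: R_conj)
qed
lemma dv_Ldisj: "\<forall>a\<in>#\<Lambda>. classical a \<Longrightarrow> derivable n1 (add_mset f \<Gamma>) \<Lambda> \<Longrightarrow> derivable n2 (add_mset g \<Gamma>) \<Lambda> \<Longrightarrow>
           derivable (Suc (max n1 n2)) (add_mset (Disj f g) \<Gamma>) (\<Lambda> + \<Delta>)"
proof -
  assume a: "\<forall>a\<in>#\<Lambda>. classical a" "derivable n1 (add_mset f \<Gamma>) \<Lambda>" "derivable n2 (add_mset g \<Gamma>) \<Lambda>"
  then obtain m1 m2 where "m1 \<le> n1" "m2 \<le> n2" "derh m1 (add_mset f \<Gamma>) \<Lambda>" "derh m2 (add_mset g \<Gamma>) \<Lambda>"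
    unfolding derivable_def by blast
  with a(1) show ?thesis unfolding derivable_def
    by (intro exI[of _ "Suc (max m1 m2)"]) (auto intro: L_disj)
qed
lemma dv_Lidisj: "derivable n1 (add_mset (plug c f) \<Gamma>) \<Delta> \<Longrightarrow> derivable n2 (add_mset (plug c g) \<Gamma>) \<Delta> \<Longrightarrow>
           derivable (Suc (max n1 n2)) (add_mset (plug c (IDisj f g)) \<Gamma>) \<Delta>"
proof -
  assume a: "derivable n1 (add_mset (plug c f) \<Gamma>) \<Delta>" "derivable n2 (add_mset (plug c g) \<Gamma>) \<Delta>"
  then obtain m1 m2 where "m1 \<le> n1" "m2 \<le> n2" "derh m1 (add_mset (plug c f) \<Gamma>) \<Delta>" "derh m2 (add_mset (plug c g) \<Gamma>) \<Delta>"
    unfolding derivable_def by blast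
  then show ?thesis unfolding derivable_def
    by (intro exI[of _ "Suc (max m1 m2)"]) (auto intro: L_idisj)
qed
lemma dv_RidisjL: "derivable n \<Gamma> (add_mset (plug c f) \<Delta>) \<Longrightarrow> derivable (Suc n) \<Gamma> (add_mset (plug c (IDisj f g)) \<Delta>)"
  unfolding derivable_def using R_idisjL by fastforce
lemma dv_RidisjR: "derivable n \<Gamma> (add_mset (plug c g) \<Delta>) \<Longrightarrow> derivable (Suc n) \<Gamma> (add_mset (plug c (IDisj f g)) \<Delta>)"
  unfolding derivable_def using R_idisjR by fastforce

lemma plug_not_classical: "\<not> classical (plug c (IDisj f g))"
  by (induction c) auto

inductive red :: "fm \<Rightarrow> fm \<Rightarrow> bool" where
  "red (IDisj f g) f"
| "red (IDisj f g) g"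
| "red a a' \<Longrightarrow> red (Conj a b) (Conj a' b)"
| "red b b' \<Longrightarrow> red (Conj a b) (Conj a b')"
| "red a a' \<Longrightarrow> red (Disj a b) (Disj a' b)"
| "red b b' \<Longrightarrow> red (Disj a b) (Disj a b')"
| "red a a' \<Longrightarrow> red (IDisj a b) (IDisj a' b)"
| "red b b' \<Longrightarrow> red (IDisj a b) (IDisj a b')"

inductive_cases redE_Conj: "red (Conj a b) x"
inductive_cases redE_Disj: "red (Disj a b) x"
inductive_cases redE_IDisj: "red (IDisj a b) x"
inductive_cases redE_Neg: "red (Neg a) x"
inductive_cases redE_Atom: "red (Atom p) x"
inductive_cases redE_Bot: "red Bot x"

lemma red_plugL: "red (plug c (IDisj f g)) (plug c f)"
  by (induction c) (auto intro: red.intros)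
lemma red_plugR: "red (plug c (IDisj f g)) (plug c g)"
  by (induction c) (auto intro: red.intros)

definition rr where "rr x y \<longleftrightarrow> x = y \<or> red x y"

lemma rr_cong:
  "rr a a' \<Longrightarrow> rr (Conj a b) (Conj a' b)" "rr b b' \<Longrightarrow> rr (Conj a b) (Conj a b')"
  "rr a a' \<Longrightarrow> rr (Disj a b) (Disj a' b)" "rr b b' \<Longrightarrow> rr (Disj a b) (Disj a b')"
  "rr a a' \<Longrightarrow> rr (IDisj a b) (IDisj a' b)" "rr b b' \<Longrightarrow> rr (IDisj a b) (IDisj a b')"
  unfolding rr_def by (auto intro: red.intros)

lemma key:
  "red (plug c (IDisj f g)) \<psi> \<Longrightarrow> rr (plug c f) \<psi> \<or> rr (plug c g) \<psi> \<or>
    (\<exists>c' f' g'. \<psi> = plug c' (IDisj f' g') \<and> rr (plug c f) (plug c' f') \<and> rr (plug c g) (plug c' g'))"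
proof (induction c arbitrary: \<psi>)
  case Hole
  then have "red (IDisj f g) \<psi>" by simp
  then show ?case
  proof (rule redE_IDisj)
    fix a' assume "\<psi> = IDisj a' g" "red f a'"
    then show ?thesis by (intro disjI2 exI[of _ Hole]) (auto simp: rr_def)
  next
    fix b' assume "\<psi> = IDisj f b'" "red g b'"
    then show ?thesis by (intro disjI2 exI[of _ Hole]) (auto simp: rr_def)
  qed (auto simp: rr_def)
next
  case (CConjL c b)
  from CConjL.prems have "red (Conj (plug c (IDisj f g)) b) \<psi>" by simp
  then show ?case
  proof (rule redE_Conj)
    fix a' assume h: "\<psi> = Conj a' b" "red (plug c (IDisj f g)) a'"
    from CConjL.IH[OF h(2)] show ?thesis
    proof (elim disjE exE conjE)
      fix c' f' g' assume "a' = plug c' (IDisj f' g')" "rr (plug c f) (plug c' f')" "rr (plug c g) (plug c' g')"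
      then show ?thesis using h by (intro disjI2 exI[of _ "CConjL c' b"]) (auto intro: rr_cong)
    qed (use h in \<open>auto intro: rr_cong\<close>)
  next
    fix b' assume "\<psi> = Conj (plug c (IDisj f g)) b'" "red b b'"
    then show ?thesis by (intro disjI2 exI[of _ "CConjL c b'"]) (auto simp: rr_def intro: red.intros)
  qed
next
  case (CConjR b c)
  from CConjR.prems have "red (Conj b (plug c (IDisj f g))) \<psi>" by simp
  then show ?case
  proof (rule redE_Conj)
    fix b' assume "\<psi> = Conj b' (plug c (IDisj f g))" "red b b'"
    then show ?thesis by (intro disjI2 exI[of _ "CConjR b' c"]) (auto simp: rr_def intro: red.intros)
  next
    fix a' assume h: "\<psi> = Conj b a'" "red (plug c (IDisj f g)) a'"
    from CConjR.IH[OF h(2)] show ?thesis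
    proof (elim disjE exE conjE)
      fix c' f' g' assume "a' = plug c' (IDisj f' g')" "rr (plug c f) (plug c' f')" "rr (plug c g) (plug c' g')"
      then show ?thesis using h by (intro disjI2 exI[of _ "CConjR b c'"]) (auto intro: rr_cong)
    qed (use h in \<open>auto intro: rr_cong\<close>)
  qed
next
  case (CDisjL c b)
  from CDisjL.prems have "red (Disj (plug c (IDisj f g)) b) \<psi>" by simp
  then show ?case
  proof (rule redE_Disj)
    fix a' assume h: "\<psi> = Disj a' b" "red (plug c (IDisj f g)) a'"
    from CDisjL.IH[OF h(2)] show ?thesis
    proof (elim disjE exE conjE)
      fix c' f' g' assume "a' = plug c' (IDisj f' g')" "rr (plug c f) (plug c' f')" "rr (plug c g) (plug c' g')"
      then show ?thesis using h by (intro disjI2 exI[of _ "CDisjL c' b"]) (auto intro: rr_cong)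
    qed (use h in \<open>auto intro: rr_cong\<close>)
  next
    fix b' assume "\<psi> = Disj (plug c (IDisj f g)) b'" "red b b'"
    then show ?thesis by (intro disjI2 exI[of _ "CDisjL c b'"]) (auto simp: rr_def intro: red.intros)
  qed
next
  case (CDisjR b c)
  from CDisjR.prems have "red (Disj b (plug c (IDisj f g))) \<psi>" by simp
  then show ?case
  proof (rule redE_Disj)
    fix b' assume "\<psi> = Disj b' (plug c (IDisj f g))" "red b b'"
    then show ?thesis by (intro disjI2 exI[of _ "CDisjR b' c"]) (auto simp: rr_def intro: red.intros)
  next
    fix a' assume h: "\<psi> = Disj b a'" "red (plug c (IDisj f g)) a'"
    from CDisjR.IH[OF h(2)] show ?thesis
    proof (elim disjE exE conjE)
      fix c' f' g' assume "a' = plug c' (IDisj f' g')" "rr (plug c f) (plug c' f')" "rr (plug c g) (plug c' g')"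
      then show ?thesis using h by (intro disjI2 exI[of _ "CDisjR b c'"]) (auto intro: rr_cong)
    qed (use h in \<open>auto intro: rr_cong\<close>)
  qed
next
  case (CIDisjL c b)
  from CIDisjL.prems have "red (IDisj (plug c (IDisj f g)) b) \<psi>" by simp
  then show ?case
  proof (rule redE_IDisj)
    assume "\<psi> = plug c (IDisj f g)"
    then show ?thesis by (intro disjI2 exI[of _ c]) (auto simp: rr_def intro: red.intros)
  next
    assume "\<psi> = b"
    then show ?thesis by (auto simp: rr_def intro: red.intros)
  next
    fix a' assume h: "\<psi> = IDisj a' b" "red (plug c (IDisj f g)) a'"
    from CIDisjL.IH[OF h(2)] show ?thesis
    proof (elim disjE exE conjE)
      fix c' f' g' assume "a' = plug c' (IDisj f' g')" "rr (plug c f) (plug c' f')" "rr (plug c g) (plug c' g')"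
      then show ?thesis using h by (intro disjI2 exI[of _ "CIDisjL c' b"]) (auto intro: rr_cong)
    qed (use h in \<open>auto intro: rr_cong\<close>)
  next
    fix b' assume "\<psi> = IDisj (plug c (IDisj f g)) b'" "red b b'"
    then show ?thesis by (intro disjI2 exI[of _ "CIDisjL c b'"]) (auto simp: rr_def intro: red.intros)
  qed
next
  case (CIDisjR b c)
  from CIDisjR.prems have "red (IDisj b (plug c (IDisj f g))) \<psi>" by simp
  then show ?case
  proof (rule redE_IDisj)
    assume "\<psi> = b"
    then show ?thesis by (auto simp: rr_def intro: red.intros)
  next
    assume "\<psi> = plug c (IDisj f g)"
    then show ?thesis by (intro disjI2 exI[of _ c]) (auto simp: rr_def intro: red.intros)
  next
    fix b' assume "\<psi> = IDisj b' (plug c (IDisj f g))" "red b b'"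
    then show ?thesis by (intro disjI2 exI[of _ "CIDisjR b' c"]) (auto simp: rr_def intro: red.intros)
  next
    fix a' assume h: "\<psi> = IDisj b a'" "red (plug c (IDisj f g)) a'"
    from CIDisjR.IH[OF h(2)] show ?thesis
    proof (elim disjE exE conjE)
      fix c' f' g' assume "a' = plug c' (IDisj f' g')" "rr (plug c f) (plug c' f')" "rr (plug c g) (plug c' g')"
      then show ?thesis using h by (intro disjI2 exI[of _ "CIDisjR b c'"]) (auto intro: rr_cong)
    qed (use h in \<open>auto intro: rr_cong\<close>)
  qed
qed


inductive linv :: "fm \<Rightarrow> fm multiset \<Rightarrow> fm multiset \<Rightarrow> bool" where
  lConj: "linv (Conj f g) {#f, g#} {#}"
| lDisjL: "linv (Disj f g) {#f#} {#}"
| lDisjR: "linv (Disj f g) {#g#} {#}"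
| lNeg: "classical a \<Longrightarrow> linv (Neg a) {#} {#a#}"
| lRed: "red \<phi> \<psi> \<Longrightarrow> linv \<phi> {#\<psi>#} {#}"

lemma linv_cl: "linv \<phi> A B \<Longrightarrow> \<forall>x\<in>#B. classical x"
  by (induction rule: linv.induct) auto
lemma linv_NegE: "linv (Neg a) A B \<Longrightarrow> A = {#} \<and> B = {#a#}"
  by (auto elim!: linv.cases redE_Neg)
lemma linv_Atom: "\<not> linv (Atom p) A B" "\<not> linv Bot A B"
  by (auto elim!: linv.cases redE_Atom redE_Bot)
lemma linv_ConjE: "linv (Conj f g) A B \<Longrightarrow> B = {#} \<and> (A = {#f, g#} \<or> (\<exists>f'. red f f' \<and> A = {#Conj f' g#}) \<or> (\<exists>g'. red g g' \<and> A = {#Conj f g'#}))"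
  by (auto elim!: linv.cases redE_Conj)
lemma linv_DisjE: "linv (Disj f g) A B \<Longrightarrow> B = {#} \<and> (A = {#f#} \<or> A = {#g#} \<or> (\<exists>f'. red f f' \<and> A = {#Disj f' g#}) \<or> (\<exists>g'. red g g' \<and> A = {#Disj f g'#}))"
  by (auto elim!: linv.cases redE_Disj)

lemma plug_Conj: "plug c (IDisj f g) = Conj x y \<Longrightarrow> (\<exists>c0. c = CConjL c0 y \<and> x = plug c0 (IDisj f g)) \<or> (\<exists>c0. c = CConjR x c0 \<and> y = plug c0 (IDisj f g))"
  by (cases c) auto
lemma plug_Disj: "plug c (IDisj f g) = Disj x y \<Longrightarrow> (\<exists>c0. c = CDisjL c0 y \<and> x = plug c0 (IDisj f g)) \<or> (\<exists>c0. c = CDisjR x c0 \<and> y = plug c0 (IDisj f g))"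
  by (cases c) auto
lemma plug_Neg: "plug c (IDisj f g) \<noteq> Neg x"
  by (cases c) auto

lemma LINV: "derh n G D \<Longrightarrow> G = add_mset \<phi> H \<Longrightarrow> linv \<phi> A B \<Longrightarrow> derivable n (H + A) (D + B)"
proof (induction n G D arbitrary: \<phi> H A B rule: derh.induct)
  case (ax_atom p \<Gamma> \<Delta> \<phi> H A B)
  from ax_atom.prems(1) consider "\<phi> = Atom p" | K where "\<Gamma> = add_mset \<phi> K" "H = add_mset (Atom p) K"
    by (auto simp: add_eq_conv_ex)
  then show ?case using ax_atom.prems(2) by cases (auto simp: linv_Atom intro: dv_ax1 dv_ax1')
next
  case (ax_bot \<Gamma> \<Delta> \<phi> H A B)
  from ax_bot.prems(1) consider "\<phi> = Bot" | K where "\<Gamma> = add_mset \<phi> K" "H = add_mset Bot K"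
    by (auto simp: add_eq_conv_ex)
  then show ?case using ax_bot.prems(2) by cases (auto simp: linv_Atom intro: dv_axb dv_axb')
next
  case (L_neg a n \<Gamma> \<Delta> \<phi> H A B)
  from L_neg.prems(1) consider (p) "\<phi> = Neg a" "\<Gamma> = H" | (s) K where "\<Gamma> = add_mset \<phi> K" "H = add_mset (Neg a) K"
    by (auto simp: add_eq_conv_ex)
  then show ?case
  proof cases
    case p
    with L_neg.prems(2) have "A = {#}" "B = {#a#}" by (auto dest: linv_NegE)
    with p L_neg.hyps(2) show ?thesis by (auto intro!: dv_derh_le)
  next
    case s
    have "derivable n (K + A) (add_mset a \<Delta> + B)" using L_neg.IH[of \<phi> K A B] s L_neg.prems(2) by simp
    then have "derivable (Suc n) (add_mset (Neg a) (K + A)) (\<Delta> + B)" using L_neg.hyps(1) by (intro dv_Lneg) auto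
    with s show ?thesis by simp
  qed
next
  case (R_neg a n \<Gamma> \<Delta> \<phi> H A B)
  have "derivable n (add_mset a H + A) (\<Delta> + B)" using R_neg.IH[of \<phi> "add_mset a H" A B] R_neg.prems by (simp add: add_mset_commute)
  then have "derivable (Suc n) (H + A) (add_mset (Neg a) (\<Delta> + B))" using R_neg.hyps(1) by (intro dv_Rneg) auto
  then show ?case by simp
next
  case (L_conj n f g \<Gamma> \<Delta> \<phi> H A B)
  from L_conj.prems(1) consider (p) "\<phi> = Conj f g" "\<Gamma> = H" | (s) K where "\<Gamma> = add_mset \<phi> K" "H = add_mset (Conj f g) K"
    by (auto simp: add_eq_conv_ex)
  then show ?case
  proof cases
    case p
    with L_conj.prems(2) have B: "B = {#}" and "A = {#f, g#} \<or> (\<exists>f'. red f f' \<and> A = {#Conj f' g#}) \<or> (\<exists>g'. red g g' \<and> A = {#Conj f g'#})"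
      by (auto dest: linv_ConjE)
    then consider "A = {#f, g#}" | f' where "red f f'" "A = {#Conj f' g#}" | g' where "red g g'" "A = {#Conj f g'#}" by blast
    then show ?thesis
    proof cases
      case 1 with p B L_conj.hyps show ?thesis by (auto intro!: dv_derh_le)
    next
      case 2
      have "derivable n (add_mset g \<Gamma> + {#f'#}) (\<Delta> + {#})" using L_conj.IH[of f "add_mset g \<Gamma>" "{#f'#}" "{#}"] 2 by (auto intro: lRed)
      then have "derivable (Suc n) (add_mset (Conj f' g) \<Gamma>) \<Delta>" by (intro dv_Lconj) (simp add: add_mset_commute)
      with 2 p B show ?thesis by simp
    next
      case 3
      have "derivable n (add_mset f \<Gamma> + {#g'#}) (\<Delta> + {#})" using L_conj.IH[of g "add_mset f \<Gamma>" "{#g'#}" "{#}"] 3 by (auto intro: lRed simp: add_mset_commute)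
      then have "derivable (Suc n) (add_mset (Conj f g') \<Gamma>) \<Delta>" by (intro dv_Lconj) (simp add: add_mset_commute)
      with 3 p B show ?thesis by simp
    qed
  next
    case s
    have "derivable n (add_mset f (add_mset g K) + A) (\<Delta> + B)" using L_conj.IH[of \<phi> "add_mset f (add_mset g K)" A B] s L_conj.prems(2) by (simp add: add_mset_commute)
    then have "derivable (Suc n) (add_mset (Conj f g) (K + A)) (\<Delta> + B)" by (intro dv_Lconj) simp
    with s show ?thesis by simp
  qed
next
  case (R_conj \<Lambda> n1 \<Gamma> f n2 g \<Delta> \<phi> H A B)
  have 1: "derivable n1 (H + A) (add_mset f (\<Lambda> + B))" using R_conj.IH(1)[of \<phi> H A B] R_conj.prems by simp
  have 2: "derivable n2 (H + A) (add_mset g (\<Lambda> + B))" using R_conj.IH(2)[of \<phi> H A B] R_conj.prems by simp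
  have "\<forall>a\<in>#\<Lambda> + B. classical a" using R_conj.hyps(1) linv_cl[OF R_conj.prems(2)] by auto
  from dv_Rconj[OF this 1 2, of \<Delta>] show ?case by (simp add: ac_simps)
next
  case (L_disj \<Lambda> n1 f \<Gamma> n2 g \<Delta> \<phi> H A B)
  from L_disj.prems(1) consider (p) "\<phi> = Disj f g" "\<Gamma> = H" | (s) K where "\<Gamma> = add_mset \<phi> K" "H = add_mset (Disj f g) K"
    by (auto simp: add_eq_conv_ex)
  then show ?case
  proof cases
    case p
    with L_disj.prems(2) have B: "B = {#}" and "A = {#f#} \<or> A = {#g#} \<or> (\<exists>f'. red f f' \<and> A = {#Disj f' g#}) \<or> (\<exists>g'. red g g' \<and> A = {#Disj f g'#})"
      by (auto dest: linv_DisjE)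
    then consider "A = {#f#}" | "A = {#g#}" | f' where "red f f'" "A = {#Disj f' g#}" | g' where "red g g'" "A = {#Disj f g'#}" by blast
    then show ?thesis
    proof cases
      case 1
      have "derivable n1 (add_mset f \<Gamma> + {#}) (\<Lambda> + \<Delta>)" by (rule dv_weak) (rule dv_derh[OF L_disj.hyps(2)])
      with 1 p B show ?thesis by (auto intro: dv_mono)
    next
      case 2
      have "derivable n2 (add_mset g \<Gamma> + {#}) (\<Lambda> + \<Delta>)" by (rule dv_weak) (rule dv_derh[OF L_disj.hyps(3)])
      with 2 p B show ?thesis by (auto intro: dv_mono)
    next
      case 3
      have "derivable n1 (\<Gamma> + {#f'#}) (\<Lambda> + {#})" using L_disj.IH(1)[of f \<Gamma> "{#f'#}" "{#}"] 3 by (auto intro: lRed)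
      then have "derivable (Suc (max n1 n2)) (add_mset (Disj f' g) \<Gamma>) (\<Lambda> + \<Delta>)"
        using L_disj.hyps(1) dv_derh[OF L_disj.hyps(3)] by (intro dv_Ldisj) auto
      with 3 p B show ?thesis by simp
    next
      case 4
      have "derivable n2 (\<Gamma> + {#g'#}) (\<Lambda> + {#})" using L_disj.IH(2)[of g \<Gamma> "{#g'#}" "{#}"] 4 by (auto intro: lRed)
      then have "derivable (Suc (max n1 n2)) (add_mset (Disj f g') \<Gamma>) (\<Lambda> + \<Delta>)"
        using L_disj.hyps(1) dv_derh[OF L_disj.hyps(2)] by (intro dv_Ldisj) auto
      with 4 p B show ?thesis by simp
    qed
  next
    case s
    have 1: "derivable n1 (add_mset f (K + A)) (\<Lambda> + B)" using L_disj.IH(1)[of \<phi> "add_mset f K" A B] s L_disj.prems(2) by (simp add: add_mset_commute)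
    have 2: "derivable n2 (add_mset g (K + A)) (\<Lambda> + B)" using L_disj.IH(2)[of \<phi> "add_mset g K" A B] s L_disj.prems(2) by (simp add: add_mset_commute)
    have "\<forall>a\<in>#\<Lambda> + B. classical a" using L_disj.hyps(1) linv_cl[OF L_disj.prems(2)] by auto
    from dv_Ldisj[OF this 1 2, of \<Delta>] s show ?thesis by (simp add: ac_simps)
  qed
next
  case (R_disj n \<Gamma> f g \<Delta> \<phi> H A B)
  have "derivable n (H + A) (add_mset f (add_mset g (\<Delta> + B)))" using R_disj.IH[of \<phi> H A B] R_disj.prems by simp
  from dv_Rdisj[OF this] show ?case by simp
next
  case (R_idisjL n \<Gamma> c f \<Delta> g \<phi> H A B)
  have "derivable n (H + A) (add_mset (plug c f) (\<Delta> + B))" using R_idisjL.IH[of \<phi> H A B] R_idisjL.prems by simp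
  from dv_RidisjL[OF this] show ?case by simp
next
  case (R_idisjR n \<Gamma> c g \<Delta> f \<phi> H A B)
  have "derivable n (H + A) (add_mset (plug c g) (\<Delta> + B))" using R_idisjR.IH[of \<phi> H A B] R_idisjR.prems by simp
  from dv_RidisjR[OF this] show ?case by simp
next
  case (L_idisj n1 c f \<Gamma> \<Delta> n2 g \<phi> H A B)
  from L_idisj.prems(1) consider (p) "\<phi> = plug c (IDisj f g)" "\<Gamma> = H" | (s) K where "\<Gamma> = add_mset \<phi> K" "H = add_mset (plug c (IDisj f g)) K"
    by (auto simp: add_eq_conv_ex)
  then show ?case
  proof cases
    case s
    have 1: "derivable n1 (add_mset (plug c f) (K + A)) (\<Delta> + B)" using L_idisj.IH(1)[of \<phi> "add_mset (plug c f) K" A B] s L_idisj.prems(2) by (simp add: add_mset_commute)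
    have 2: "derivable n2 (add_mset (plug c g) (K + A)) (\<Delta> + B)" using L_idisj.IH(2)[of \<phi> "add_mset (plug c g) K" A B] s L_idisj.prems(2) by (simp add: add_mset_commute)
    from dv_Lidisj[OF 1 2] s show ?thesis by simp
  next
    case p
    have R1: "derivable n1 (add_mset y \<Gamma>) \<Delta>" if "rr (plug c f) y" for y
      using that L_idisj.IH(1)[of "plug c f" \<Gamma> "{#y#}" "{#}"] dv_derh[OF L_idisj.hyps(1)] unfolding rr_def
      by (auto intro: lRed)
    have R2: "derivable n2 (add_mset y \<Gamma>) \<Delta>" if "rr (plug c g) y" for y
      using that L_idisj.IH(2)[of "plug c g" \<Gamma> "{#y#}" "{#}"] dv_derh[OF L_idisj.hyps(2)] unfolding rr_def
      by (auto intro: lRed)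
    from L_idisj.prems(2) show ?thesis
    proof (cases rule: linv.cases)
      case (lConj f1 g1)
      from plug_Conj[of c f g f1 g1] lConj(1) p consider c0 where "c = CConjL c0 g1" "f1 = plug c0 (IDisj f g)"
        | c0 where "c = CConjR f1 c0" "g1 = plug c0 (IDisj f g)" by auto
      then show ?thesis
      proof cases
        case 1
        have a: "derivable n1 (\<Gamma> + {#plug c0 f, g1#}) (\<Delta> + {#})"
          using L_idisj.IH(1)[of "Conj (plug c0 f) g1" \<Gamma> "{#plug c0 f, g1#}" "{#}"] 1 by (auto intro: linv.intros)
        have b: "derivable n2 (\<Gamma> + {#plug c0 g, g1#}) (\<Delta> + {#})"
          using L_idisj.IH(2)[of "Conj (plug c0 g) g1" \<Gamma> "{#plug c0 g, g1#}" "{#}"] 1 by (auto intro: linv.intros)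
        from dv_Lidisj[of n1 c0 f "add_mset g1 \<Gamma>" \<Delta> n2 g] a b 1 lConj p show ?thesis by simp
      next
        case 2
        have a: "derivable n1 (\<Gamma> + {#f1, plug c0 f#}) (\<Delta> + {#})"
          using L_idisj.IH(1)[of "Conj f1 (plug c0 f)" \<Gamma> "{#f1, plug c0 f#}" "{#}"] 2 by (auto intro: linv.intros)
        have b: "derivable n2 (\<Gamma> + {#f1, plug c0 g#}) (\<Delta> + {#})"
          using L_idisj.IH(2)[of "Conj f1 (plug c0 g)" \<Gamma> "{#f1, plug c0 g#}" "{#}"] 2 by (auto intro: linv.intros)
        from dv_Lidisj[of n1 c0 f "add_mset f1 \<Gamma>" \<Delta> n2 g] a b 2 lConj p show ?thesis by (simp add: add_mset_commute)
      qed
    next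
      case (lDisjL f1 g1)
      from plug_Disj[of c f g f1 g1] lDisjL(1) p consider c0 where "c = CDisjL c0 g1" "f1 = plug c0 (IDisj f g)"
        | c0 where "c = CDisjR f1 c0" "g1 = plug c0 (IDisj f g)" by auto
      then show ?thesis
      proof cases
        case 1
        have a: "derivable n1 (\<Gamma> + {#plug c0 f#}) (\<Delta> + {#})"
          using L_idisj.IH(1)[of "Disj (plug c0 f) g1" \<Gamma> "{#plug c0 f#}" "{#}"] 1 by (auto intro: linv.intros)
        have b: "derivable n2 (\<Gamma> + {#plug c0 g#}) (\<Delta> + {#})"
          using L_idisj.IH(2)[of "Disj (plug c0 g) g1" \<Gamma> "{#plug c0 g#}" "{#}"] 1 by (auto intro: linv.intros)
        from dv_Lidisj[of n1 c0 f "\<Gamma>" \<Delta> n2 g] a b 1 lDisjL p show ?thesis by simp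
      next
        case 2
        have a: "derivable n1 (\<Gamma> + {#f1#}) (\<Delta> + {#})"
          using L_idisj.IH(1)[of "Disj f1 (plug c0 f)" \<Gamma> "{#f1#}" "{#}"] 2 by (auto intro: linv.intros)
        with 2 lDisjL p show ?thesis by (auto intro: dv_mono)
      qed
    next
      case (lDisjR f1 g1)
      from plug_Disj[of c f g f1 g1] lDisjR(1) p consider c0 where "c = CDisjL c0 g1" "f1 = plug c0 (IDisj f g)"
        | c0 where "c = CDisjR f1 c0" "g1 = plug c0 (IDisj f g)" by auto
      then show ?thesis
      proof cases
        case 2
        have a: "derivable n1 (\<Gamma> + {#plug c0 f#}) (\<Delta> + {#})"
          using L_idisj.IH(1)[of "Disj f1 (plug c0 f)" \<Gamma> "{#plug c0 f#}" "{#}"] 2 by (auto intro: linv.intros)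
        have b: "derivable n2 (\<Gamma> + {#plug c0 g#}) (\<Delta> + {#})"
          using L_idisj.IH(2)[of "Disj f1 (plug c0 g)" \<Gamma> "{#plug c0 g#}" "{#}"] 2 by (auto intro: linv.intros)
        from dv_Lidisj[of n1 c0 f "\<Gamma>" \<Delta> n2 g] a b 2 lDisjR p show ?thesis by simp
      next
        case 1
        have a: "derivable n1 (\<Gamma> + {#g1#}) (\<Delta> + {#})"
          using L_idisj.IH(1)[of "Disj (plug c0 f) g1" \<Gamma> "{#g1#}" "{#}"] 1 by (auto intro: linv.intros)
        with 1 lDisjR p show ?thesis by (auto intro: dv_mono)
      qed
    next
      case (lNeg a)
      then show ?thesis using p plug_Neg by metis
    next
      case (lRed \<psi>)
      from key[of c f g \<psi>] lRed p consider "rr (plug c f) \<psi>" | "rr (plug c g) \<psi>"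
        | c' f' g' where "\<psi> = plug c' (IDisj f' g')" "rr (plug c f) (plug c' f')" "rr (plug c g) (plug c' g')" by blast
      then show ?thesis
      proof cases
        case 1 from R1[OF 1] lRed p show ?thesis by (auto intro: dv_mono)
      next
        case 2 from R2[OF 2] lRed p show ?thesis by (auto intro: dv_mono)
      next
        case 3
        from dv_Lidisj[OF R1[OF 3(2)] R2[OF 3(3)]] 3 lRed p show ?thesis by simp
      qed
    qed
  qed
qed


inductive rinv :: "fm \<Rightarrow> fm multiset \<Rightarrow> fm multiset \<Rightarrow> bool" where
  rConjL: "rinv (Conj f g) {#} {#f#}"
| rConjR: "rinv (Conj f g) {#} {#g#}"
| rDisj: "rinv (Disj f g) {#} {#f, g#}"
| rNeg: "rinv (Neg a) {#a#} {#}"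

lemma rinv_cl: "rinv \<psi> A B \<Longrightarrow> classical \<psi> \<Longrightarrow> \<forall>x\<in>#B. classical x"
  by (induction rule: rinv.induct) auto
lemma rinv_Atom: "\<not> rinv (Atom p) A B"
  by (auto elim: rinv.cases)

lemma split_plus: "add_mset x Y = P + Q \<Longrightarrow> (\<exists>P'. P = add_mset x P' \<and> Y = P' + Q) \<or> (\<exists>Q'. Q = add_mset x Q' \<and> Y = P + Q')"
proof -
  assume h: "add_mset x Y = P + Q"
  then have "x \<in># P + Q" by (metis union_single_eq_member)
  then consider "x \<in># P" | "x \<in># Q" by auto
  then show ?thesis
  proof cases
    case 1
    then obtain P' where "P = add_mset x P'" by (blast dest: multi_member_split)
    with h show ?thesis by auto
  next
    case 2
    then obtain Q' where "Q = add_mset x Q'" by (blast dest: multi_member_split)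
    with h show ?thesis by auto
  qed
qed

lemma RINV: "derh n G D \<Longrightarrow> D = add_mset \<psi> E \<Longrightarrow> classical \<psi> \<Longrightarrow> rinv \<psi> A B \<Longrightarrow> derivable n (G + A) (E + B)"
proof (induction n G D arbitrary: \<psi> E A B rule: derh.induct)
  case (ax_atom p \<Gamma> \<Delta> \<psi> E A B)
  from ax_atom.prems(1) consider "\<psi> = Atom p" | K where "\<Delta> = add_mset \<psi> K" "E = add_mset (Atom p) K"
    by (auto simp: add_eq_conv_ex)
  then show ?case using ax_atom.prems(3) by cases (auto simp: rinv_Atom intro: dv_ax1 dv_ax1')
next
  case (ax_bot \<Gamma> \<Delta> \<psi> E A B)
  then show ?case by (auto intro: dv_axb dv_axb')
next
  case (L_neg a n \<Gamma> \<Delta> \<psi> E A B)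
  have "derivable n (\<Gamma> + A) (add_mset a (E + B))" using L_neg.IH[of \<psi> "add_mset a E" A B] L_neg.prems by (simp add: add_mset_commute)
  from dv_Lneg[OF L_neg.hyps(1) this] show ?case by simp
next
  case (R_neg a n \<Gamma> \<Delta> \<psi> E A B)
  from R_neg.prems(1) consider (p) "\<psi> = Neg a" "\<Delta> = E" | (s) K where "\<Delta> = add_mset \<psi> K" "E = add_mset (Neg a) K"
    by (auto simp: add_eq_conv_ex)
  then show ?case
  proof cases
    case p
    with R_neg.prems(3) have "A = {#a#}" "B = {#}" by (auto elim: rinv.cases)
    with p R_neg.hyps(2) show ?thesis by (auto intro!: dv_derh_le)
  next
    case s
    have "derivable n (add_mset a (\<Gamma> + A)) (K + B)" using R_neg.IH[of \<psi> K A B] s R_neg.prems by simp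
    from dv_Rneg[OF R_neg.hyps(1) this] s show ?thesis by simp
  qed
next
  case (L_conj n f g \<Gamma> \<Delta> \<psi> E A B)
  have "derivable n (add_mset f (add_mset g (\<Gamma> + A))) (E + B)" using L_conj.IH[of \<psi> E A B] L_conj.prems by simp
  from dv_Lconj[OF this] show ?case by simp
next
  case (R_conj \<Lambda> n1 \<Gamma> f n2 g \<Delta> \<psi> E A B)
  from R_conj.prems(1) consider (p) "\<psi> = Conj f g" "\<Lambda> + \<Delta> = E" | (s) K where "\<Lambda> + \<Delta> = add_mset \<psi> K" "E = add_mset (Conj f g) K"
    by (auto simp: add_eq_conv_ex)
  then show ?case
  proof cases
    case p
    with R_conj.prems(3) have "A = {#} \<and> (B = {#f#} \<or> B = {#g#})" by (auto elim: rinv.cases)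
    then consider "A = {#}" "B = {#f#}" | "A = {#}" "B = {#g#}" by blast
    then show ?thesis
    proof cases
      case 1
      have "derivable n1 (\<Gamma> + {#}) (add_mset f \<Lambda> + \<Delta>)" by (rule dv_weak) (rule dv_derh[OF R_conj.hyps(2)])
      with 1 p show ?thesis by (auto intro: dv_mono)
    next
      case 2
      have "derivable n2 (\<Gamma> + {#}) (add_mset g \<Lambda> + \<Delta>)" by (rule dv_weak) (rule dv_derh[OF R_conj.hyps(3)])
      with 2 p show ?thesis by (auto intro: dv_mono)
    qed
  next
    case s
    from split_plus[OF s(1)[symmetric]] show ?thesis
    proof (elim disjE exE conjE)
      fix L' assume L: "\<Lambda> = add_mset \<psi> L'" "K = L' + \<Delta>"
      have 1: "derivable n1 (\<Gamma> + A) (add_mset f (L' + B))" using R_conj.IH(1)[of \<psi> "add_mset f L'" A B] R_conj.prems L by (simp add: add_mset_commute)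
      have 2: "derivable n2 (\<Gamma> + A) (add_mset g (L' + B))" using R_conj.IH(2)[of \<psi> "add_mset g L'" A B] R_conj.prems L by (simp add: add_mset_commute)
      have "\<forall>a\<in>#L' + B. classical a" using R_conj.hyps(1) rinv_cl[OF R_conj.prems(3,2)] L by auto
      from dv_Rconj[OF this 1 2, of \<Delta>] s L show ?thesis by (simp add: ac_simps)
    next
      fix D' assume L: "\<Delta> = add_mset \<psi> D'" "K = \<Lambda> + D'"
      have 1: "derivable n1 (\<Gamma> + A) (add_mset f \<Lambda> + {#})" by (rule dv_weak) (rule dv_derh[OF R_conj.hyps(2)])
      have 2: "derivable n2 (\<Gamma> + A) (add_mset g \<Lambda> + {#})" by (rule dv_weak) (rule dv_derh[OF R_conj.hyps(3)])
      from dv_Rconj[OF R_conj.hyps(1) 1[simplified] 2[simplified], of "D' + B"] s L show ?thesis by (simp add: ac_simps)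
    qed
  qed
next
  case (L_disj \<Lambda> n1 f \<Gamma> n2 g \<Delta> \<psi> E A B)
  from split_plus[OF L_disj.prems(1)[symmetric]] show ?case
  proof (elim disjE exE conjE)
    fix L' assume L: "\<Lambda> = add_mset \<psi> L'" "E = L' + \<Delta>"
    have 1: "derivable n1 (add_mset f (\<Gamma> + A)) (L' + B)" using L_disj.IH(1)[of \<psi> L' A B] L_disj.prems L by simp
    have 2: "derivable n2 (add_mset g (\<Gamma> + A)) (L' + B)" using L_disj.IH(2)[of \<psi> L' A B] L_disj.prems L by simp
    have "\<forall>a\<in>#L' + B. classical a" using L_disj.hyps(1) rinv_cl[OF L_disj.prems(3,2)] L by auto
    from dv_Ldisj[OF this 1 2, of \<Delta>] L show ?thesis by (simp add: ac_simps)
  next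
    fix D' assume L: "\<Delta> = add_mset \<psi> D'" "E = \<Lambda> + D'"
    have 1: "derivable n1 (add_mset f \<Gamma> + A) (\<Lambda> + {#})" by (rule dv_weak) (rule dv_derh[OF L_disj.hyps(2)])
    have 2: "derivable n2 (add_mset g \<Gamma> + A) (\<Lambda> + {#})" by (rule dv_weak) (rule dv_derh[OF L_disj.hyps(3)])
    from dv_Ldisj[OF L_disj.hyps(1) 1[simplified] 2[simplified], of "D' + B"] L show ?thesis by (simp add: ac_simps)
  qed
next
  case (R_disj n \<Gamma> f g \<Delta> \<psi> E A B)
  from R_disj.prems(1) consider (p) "\<psi> = Disj f g" "\<Delta> = E" | (s) K where "\<Delta> = add_mset \<psi> K" "E = add_mset (Disj f g) K"
    by (auto simp: add_eq_conv_ex)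
  then show ?case
  proof cases
    case p
    with R_disj.prems(3) have "A = {#}" "B = {#f, g#}" by (auto elim: rinv.cases)
    with p R_disj.hyps show ?thesis by (auto intro!: dv_derh_le)
  next
    case s
    have "derivable n (\<Gamma> + A) (add_mset f (add_mset g (K + B)))" using R_disj.IH[of \<psi> "add_mset f (add_mset g K)" A B] s R_disj.prems by (simp add: add_mset_commute)
    from dv_Rdisj[OF this] s show ?thesis by simp
  qed
next
  case (L_idisj n1 c f \<Gamma> \<Delta> n2 g \<psi> E A B)
  have 1: "derivable n1 (add_mset (plug c f) (\<Gamma> + A)) (E + B)" using L_idisj.IH(1)[of \<psi> E A B] L_idisj.prems by simp
  have 2: "derivable n2 (add_mset (plug c g) (\<Gamma> + A)) (E + B)" using L_idisj.IH(2)[of \<psi> E A B] L_idisj.prems by simp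
  from dv_Lidisj[OF 1 2] show ?case by simp
next
  case (R_idisjL n \<Gamma> c f \<Delta> g \<psi> E A B)
  from R_idisjL.prems(1,2) plug_not_classical obtain K where s: "\<Delta> = add_mset \<psi> K" "E = add_mset (plug c (IDisj f g)) K"
    by (metis add_eq_conv_ex)
  have "derivable n (\<Gamma> + A) (add_mset (plug c f) (K + B))" using R_idisjL.IH[of \<psi> "add_mset (plug c f) K" A B] s R_idisjL.prems by (simp add: add_mset_commute)
  from dv_RidisjL[OF this] s show ?case by simp
next
  case (R_idisjR n \<Gamma> c g \<Delta> f \<psi> E A B)
  from R_idisjR.prems(1,2) plug_not_classical obtain K where s: "\<Delta> = add_mset \<psi> K" "E = add_mset (plug c (IDisj f g)) K"
    by (metis add_eq_conv_ex)
  have "derivable n (\<Gamma> + A) (add_mset (plug c g) (K + B))" using R_idisjR.IH[of \<psi> "add_mset (plug c g) K" A B] s R_idisjR.prems by (simp add: add_mset_commute)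
  from dv_RidisjR[OF this] s show ?case by simp
qed


lemma dv_atom_mem: "Atom p \<in># G \<Longrightarrow> Atom p \<in># D \<Longrightarrow> 1 \<le> n \<Longrightarrow> derivable n G D"
  by (metis dv_ax1 dv_mono multi_member_split)
lemma dv_bot_mem: "Bot \<in># G \<Longrightarrow> 1 \<le> n \<Longrightarrow> derivable n G D"
  by (metis dv_axb dv_mono multi_member_split)

lemma split2: "add_mset P G' = add_mset x (add_mset x G) \<Longrightarrow> (P = x \<and> G' = add_mset x G) \<or> (\<exists>K. G' = add_mset x (add_mset x K) \<and> G = add_mset P K)"
  by (auto simp: add_eq_conv_ex)

lemma split_plus2: "add_mset x (add_mset x K) = P + Q \<Longrightarrow> (\<exists>P'. P = add_mset x (add_mset x P') \<and> K = P' + Q) \<or> (\<exists>Q'. Q = add_mset x Q' \<and> add_mset x K = P + Q')"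
proof -
  assume h: "add_mset x (add_mset x K) = P + Q"
  from split_plus[OF h] show ?thesis
  proof (elim disjE exE conjE)
    fix P1 assume a: "P = add_mset x P1" "add_mset x K = P1 + Q"
    from split_plus[OF a(2)] show ?thesis
    proof (elim disjE exE conjE)
      fix P' assume "P1 = add_mset x P'" "K = P' + Q" with a show ?thesis by auto
    next
      fix Q' assume "Q = add_mset x Q'" "K = P1 + Q'" with a show ?thesis by auto
    qed
  next
    fix Q' assume "Q = add_mset x Q'" "add_mset x K = P + Q'" then show ?thesis by auto
  qed
qed

lemma CONTR: "derh n G D \<Longrightarrow> (\<forall>\<nu> H. G = add_mset \<nu> (add_mset \<nu> H) \<longrightarrow> derivable n (add_mset \<nu> H) D) \<and>
   (\<forall>\<alpha> E. classical \<alpha> \<longrightarrow> D = add_mset \<alpha> (add_mset \<alpha> E) \<longrightarrow> derivable n G (add_mset \<alpha> E))"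
proof (induction n arbitrary: G D rule: less_induct)
  case (less n)
  have CL: "derivable k (add_mset \<nu> H) D'" if "k < n" "derivable k (add_mset \<nu> (add_mset \<nu> H)) D'" for k \<nu> H D'
  proof -
    from that(2) obtain m where m: "m \<le> k" "derh m (add_mset \<nu> (add_mset \<nu> H)) D'" unfolding derivable_def by blast
    with that(1) have "m < n" by simp
    from less.IH[OF this m(2)] have "derivable m (add_mset \<nu> H) D'" by blast
    from dv_mono[OF this m(1)] show ?thesis .
  qed
  have CR: "derivable k G' (add_mset \<alpha> E)" if "k < n" "classical \<alpha>" "derivable k G' (add_mset \<alpha> (add_mset \<alpha> E))" for k \<alpha> E G'
  proof -
    from that(3) obtain m where m: "m \<le> k" "derh m G' (add_mset \<alpha> (add_mset \<alpha> E))" unfolding derivable_def by blast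
    with that(1) have "m < n" by simp
    from less.IH[OF this m(2)] that(2) have "derivable m G' (add_mset \<alpha> E)" by blast
    from dv_mono[OF this m(1)] show ?thesis .
  qed
  from less.prems show ?case
  proof (cases rule: derh.cases)
    case (ax_atom p \<Gamma>0 \<Delta>0)
    then show ?thesis by (auto intro!: dv_atom_mem dest: union_single_eq_member)
  next
    case (ax_bot \<Gamma>0)
    then show ?thesis by (auto intro!: dv_bot_mem dest: union_single_eq_member)
  next
    case (L_neg a m \<Gamma>0)
    have mn: "m < n" using L_neg by simp
    show ?thesis
    proof (intro conjI allI impI)
      fix \<nu> H assume hG: "G = add_mset \<nu> (add_mset \<nu> H)"
      from split2[of "Neg a" \<Gamma>0 \<nu> H] hG L_neg(2) consider (p) "\<nu> = Neg a" "\<Gamma>0 = add_mset \<nu> H"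
        | (s) K where "\<Gamma>0 = add_mset \<nu> (add_mset \<nu> K)" "H = add_mset (Neg a) K" by auto
      then show "derivable n (add_mset \<nu> H) D"
      proof cases
        case p
        have "derivable m (H + {#}) (add_mset a D + {#a#})"
          using LINV[OF L_neg(4), of "Neg a" H "{#}" "{#a#}"] p L_neg(3) by (auto intro: linv.intros)
        then have "derivable m H (add_mset a D)" using CR[OF mn L_neg(3)] by simp
        from dv_Lneg[OF L_neg(3) this] p L_neg show ?thesis by simp
      next
        case s
        have "derivable m (add_mset \<nu> K) (add_mset a D)" using CL[OF mn] dv_derh[OF L_neg(4)] s by simp
        from dv_Lneg[OF L_neg(3) this] s L_neg show ?thesis by (simp add: add_mset_commute)
      qed
    next
      fix \<alpha> E assume ca: "classical \<alpha>" and hD: "D = add_mset \<alpha> (add_mset \<alpha> E)"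
      have "derivable m \<Gamma>0 (add_mset \<alpha> (add_mset \<alpha> (add_mset a E)))" using dv_derh[OF L_neg(4)] hD by (simp add: add_mset_commute)
      from CR[OF mn ca this] have "derivable m \<Gamma>0 (add_mset a (add_mset \<alpha> E))" by (simp add: add_mset_commute)
      from dv_Lneg[OF L_neg(3) this] L_neg show "derivable n G (add_mset \<alpha> E)" by simp
    qed
  next
    case (R_neg a m \<Delta>0)
    have mn: "m < n" using R_neg by simp
    show ?thesis
    proof (intro conjI allI impI)
      fix \<nu> H assume hG: "G = add_mset \<nu> (add_mset \<nu> H)"
      have "derivable m (add_mset \<nu> (add_mset \<nu> (add_mset a H))) \<Delta>0" using dv_derh[OF R_neg(4)] hG by (simp add: add_mset_commute)
      from CL[OF mn this] have "derivable m (add_mset a (add_mset \<nu> H)) \<Delta>0" by (simp add: add_mset_commute)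
      from dv_Rneg[OF R_neg(3) this] R_neg show "derivable n (add_mset \<nu> H) D" by simp
    next
      fix \<alpha> E assume ca: "classical \<alpha>" and hD: "D = add_mset \<alpha> (add_mset \<alpha> E)"
      from split2[of "Neg a" \<Delta>0 \<alpha> E] hD R_neg(2) consider (p) "\<alpha> = Neg a" "\<Delta>0 = add_mset \<alpha> E"
        | (s) K where "\<Delta>0 = add_mset \<alpha> (add_mset \<alpha> K)" "E = add_mset (Neg a) K" by auto
      then show "derivable n G (add_mset \<alpha> E)"
      proof cases
        case p
        have "derivable m (add_mset a G + {#a#}) (E + {#})"
          using RINV[OF R_neg(4), of "Neg a" E "{#a#}" "{#}"] p ca by (auto intro: rinv.intros)
        then have "derivable m (add_mset a G) E" using CL[OF mn] by simp
        from dv_Rneg[OF R_neg(3) this] p R_neg show ?thesis by simp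
      next
        case s
        have "derivable m (add_mset a G) (add_mset \<alpha> K)" using CR[OF mn ca] dv_derh[OF R_neg(4)] s by simp
        from dv_Rneg[OF R_neg(3) this] s R_neg show ?thesis by (simp add: add_mset_commute)
      qed
    qed
  next
    case (L_conj m f g \<Gamma>0)
    have mn: "m < n" using L_conj by simp
    show ?thesis
    proof (intro conjI allI impI)
      fix \<nu> H assume hG: "G = add_mset \<nu> (add_mset \<nu> H)"
      from split2[of "Conj f g" \<Gamma>0 \<nu> H] hG L_conj(2) consider (p) "\<nu> = Conj f g" "\<Gamma>0 = add_mset \<nu> H"
        | (s) K where "\<Gamma>0 = add_mset \<nu> (add_mset \<nu> K)" "H = add_mset (Conj f g) K" by auto
      then show "derivable n (add_mset \<nu> H) D"
      proof cases
        case p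
        have "derivable m (add_mset f (add_mset g H) + {#f, g#}) (D + {#})"
          using LINV[OF L_conj(3), of "Conj f g" "add_mset f (add_mset g H)" "{#f, g#}" "{#}"] p
          by (auto intro: linv.intros simp: add_mset_commute)
        then have "derivable m (add_mset f (add_mset f (add_mset g (add_mset g H)))) D" by (simp add: add_mset_commute)
        from CL[OF mn this] have "derivable m (add_mset g (add_mset g (add_mset f H))) D" by (simp add: add_mset_commute)
        from CL[OF mn this] have "derivable m (add_mset f (add_mset g H)) D" by (simp add: add_mset_commute)
        from dv_Lconj[OF this] p L_conj show ?thesis by simp
      next
        case s
        have "derivable m (add_mset \<nu> (add_mset \<nu> (add_mset f (add_mset g K)))) D" using dv_derh[OF L_conj(3)] s by (simp add: add_mset_commute)
        from CL[OF mn this] have "derivable m (add_mset f (add_mset g (add_mset \<nu> K))) D" by (simp add: add_mset_commute)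
        from dv_Lconj[OF this] s L_conj show ?thesis by (simp add: add_mset_commute)
      qed
    next
      fix \<alpha> E assume ca: "classical \<alpha>" and hD: "D = add_mset \<alpha> (add_mset \<alpha> E)"
      have "derivable m (add_mset f (add_mset g \<Gamma>0)) (add_mset \<alpha> (add_mset \<alpha> E))" using dv_derh[OF L_conj(3)] hD by simp
      from dv_Lconj[OF CR[OF mn ca this]] L_conj show "derivable n G (add_mset \<alpha> E)" by simp
    qed
  next
    case (R_conj \<Lambda> m1 f m2 g \<Delta>0)
    have mn: "m1 < n" "m2 < n" using R_conj by auto
    show ?thesis
    proof (intro conjI allI impI)
      fix \<nu> H assume hG: "G = add_mset \<nu> (add_mset \<nu> H)"
      have 1: "derivable m1 (add_mset \<nu> H) (add_mset f \<Lambda>)" using CL[OF mn(1)] dv_derh[OF R_conj(4)] hG by simp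
      have 2: "derivable m2 (add_mset \<nu> H) (add_mset g \<Lambda>)" using CL[OF mn(2)] dv_derh[OF R_conj(5)] hG by simp
      from dv_Rconj[OF R_conj(3) 1 2, of \<Delta>0] R_conj show "derivable n (add_mset \<nu> H) D" by simp
    next
      fix \<alpha> E assume ca: "classical \<alpha>" and hD: "D = add_mset \<alpha> (add_mset \<alpha> E)"
      from split2[of "Conj f g" "\<Lambda> + \<Delta>0" \<alpha> E] hD R_conj(2) consider (p) "\<alpha> = Conj f g" "\<Lambda> + \<Delta>0 = add_mset \<alpha> E"
        | (s) K where "\<Lambda> + \<Delta>0 = add_mset \<alpha> (add_mset \<alpha> K)" "E = add_mset (Conj f g) K" by auto
      then show "derivable n G (add_mset \<alpha> E)"
      proof cases
        case p
        from split_plus[OF p(2)[symmetric]] show ?thesis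
        proof (elim disjE exE conjE)
          fix L' assume L: "\<Lambda> = add_mset \<alpha> L'" "E = L' + \<Delta>0"
          have cf: "classical f" "classical g" using ca p by auto
          have "derivable m1 (G + {#}) (add_mset f L' + {#f#})"
            using RINV[OF R_conj(4), of \<alpha> "add_mset f L'" "{#}" "{#f#}"] p L ca by (auto intro: rinv.intros simp: add_mset_commute)
          then have 1: "derivable m1 G (add_mset f L')" using CR[OF mn(1) cf(1)] by simp
          have "derivable m2 (G + {#}) (add_mset g L' + {#g#})"
            using RINV[OF R_conj(5), of \<alpha> "add_mset g L'" "{#}" "{#g#}"] p L ca by (auto intro: rinv.intros simp: add_mset_commute)
          then have 2: "derivable m2 G (add_mset g L')" using CR[OF mn(2) cf(2)] by simp
          have "\<forall>a\<in>#L'. classical a" using R_conj(3) L by auto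
          from dv_Rconj[OF this 1 2, of \<Delta>0] R_conj p L show ?thesis by simp
        next
          fix D' assume L: "\<Delta>0 = add_mset \<alpha> D'" "E = \<Lambda> + D'"
          from dv_Rconj[OF R_conj(3) dv_derh[OF R_conj(4)] dv_derh[OF R_conj(5)], of D'] R_conj p L show ?thesis by simp
        qed
      next
        case s
        from split_plus2[OF s(1)[symmetric]] show ?thesis
        proof (elim disjE exE conjE)
          fix L' assume L: "\<Lambda> = add_mset \<alpha> (add_mset \<alpha> L')" "K = L' + \<Delta>0"
          have 1: "derivable m1 G (add_mset f (add_mset \<alpha> L'))"
            using CR[OF mn(1) ca, of G "add_mset f L'"] dv_derh[OF R_conj(4)] L by (simp add: add_mset_commute)
          have 2: "derivable m2 G (add_mset g (add_mset \<alpha> L'))"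
            using CR[OF mn(2) ca, of G "add_mset g L'"] dv_derh[OF R_conj(5)] L by (simp add: add_mset_commute)
          have "\<forall>a\<in>#add_mset \<alpha> L'. classical a" using R_conj(3) L by auto
          from dv_Rconj[OF this 1 2, of \<Delta>0] R_conj s L show ?thesis by (simp add: add_mset_commute)
        next
          fix D' assume L: "\<Delta>0 = add_mset \<alpha> D'" "add_mset \<alpha> K = \<Lambda> + D'"
          from dv_Rconj[OF R_conj(3) dv_derh[OF R_conj(4)] dv_derh[OF R_conj(5)], of D'] R_conj
          have "derivable n G (add_mset (Conj f g) (\<Lambda> + D'))" by simp
          moreover have "add_mset (Conj f g) (\<Lambda> + D') = add_mset \<alpha> E" using L(2) s(2) by (metis add_mset_commute)
          ultimately show ?thesis by simp
        qed
      qed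
    qed
  next
    case (L_disj \<Lambda> m1 f \<Gamma>0 m2 g \<Delta>0)
    have mn: "m1 < n" "m2 < n" using L_disj by auto
    show ?thesis
    proof (intro conjI allI impI)
      fix \<nu> H assume hG: "G = add_mset \<nu> (add_mset \<nu> H)"
      from split2[of "Disj f g" \<Gamma>0 \<nu> H] hG L_disj(2) consider (p) "\<nu> = Disj f g" "\<Gamma>0 = add_mset \<nu> H"
        | (s) K where "\<Gamma>0 = add_mset \<nu> (add_mset \<nu> K)" "H = add_mset (Disj f g) K" by auto
      then show "derivable n (add_mset \<nu> H) D"
      proof cases
        case p
        have "derivable m1 (add_mset f H + {#f#}) (\<Lambda> + {#})"
          using LINV[OF L_disj(5), of "Disj f g" "add_mset f H" "{#f#}" "{#}"] p
          by (auto intro: linv.intros simp: add_mset_commute)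
        then have 1: "derivable m1 (add_mset f H) \<Lambda>" using CL[OF mn(1)] by simp
        have "derivable m2 (add_mset g H + {#g#}) (\<Lambda> + {#})"
          using LINV[OF L_disj(6), of "Disj f g" "add_mset g H" "{#g#}" "{#}"] p
          by (auto intro: linv.intros simp: add_mset_commute)
        then have 2: "derivable m2 (add_mset g H) \<Lambda>" using CL[OF mn(2)] by simp
        from dv_Ldisj[OF L_disj(4) 1 2, of \<Delta>0] p L_disj show ?thesis by simp
      next
        case s
        have 1: "derivable m1 (add_mset f (add_mset \<nu> K)) \<Lambda>"
          using CL[OF mn(1), of \<nu> "add_mset f K"] dv_derh[OF L_disj(5)] s by (simp add: add_mset_commute)
        have 2: "derivable m2 (add_mset g (add_mset \<nu> K)) \<Lambda>"
          using CL[OF mn(2), of \<nu> "add_mset g K"] dv_derh[OF L_disj(6)] s by (simp add: add_mset_commute)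
        from dv_Ldisj[OF L_disj(4) 1 2, of \<Delta>0] s L_disj show ?thesis by (simp add: add_mset_commute)
      qed
    next
      fix \<alpha> E assume ca: "classical \<alpha>" and hD: "D = add_mset \<alpha> (add_mset \<alpha> E)"
      from hD L_disj(3) have "add_mset \<alpha> (add_mset \<alpha> E) = \<Lambda> + \<Delta>0" by simp
      from split_plus2[OF this] show "derivable n G (add_mset \<alpha> E)"
      proof (elim disjE exE conjE)
        fix L' assume L: "\<Lambda> = add_mset \<alpha> (add_mset \<alpha> L')" "E = L' + \<Delta>0"
        have 1: "derivable m1 (add_mset f \<Gamma>0) (add_mset \<alpha> L')"
          using CR[OF mn(1) ca] dv_derh[OF L_disj(5)] L by simp
        have 2: "derivable m2 (add_mset g \<Gamma>0) (add_mset \<alpha> L')"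
          using CR[OF mn(2) ca] dv_derh[OF L_disj(6)] L by simp
        have "\<forall>a\<in>#add_mset \<alpha> L'. classical a" using L_disj(4) L by auto
        from dv_Ldisj[OF this 1 2, of \<Delta>0] L_disj L show ?thesis by simp
      next
        fix D' assume L: "\<Delta>0 = add_mset \<alpha> D'" "add_mset \<alpha> E = \<Lambda> + D'"
        from dv_Ldisj[OF L_disj(4) dv_derh[OF L_disj(5)] dv_derh[OF L_disj(6)], of D'] L_disj L
        show ?thesis by simp
      qed
    qed
  next
    case (R_disj m f g \<Delta>0)
    have mn: "m < n" using R_disj by simp
    show ?thesis
    proof (intro conjI allI impI)
      fix \<nu> H assume hG: "G = add_mset \<nu> (add_mset \<nu> H)"
      have "derivable m (add_mset \<nu> H) (add_mset f (add_mset g \<Delta>0))" using CL[OF mn] dv_derh[OF R_disj(3)] hG by simp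
      from dv_Rdisj[OF this] R_disj show "derivable n (add_mset \<nu> H) D" by simp
    next
      fix \<alpha> E assume ca: "classical \<alpha>" and hD: "D = add_mset \<alpha> (add_mset \<alpha> E)"
      from split2[of "Disj f g" \<Delta>0 \<alpha> E] hD R_disj(2) consider (p) "\<alpha> = Disj f g" "\<Delta>0 = add_mset \<alpha> E"
        | (s) K where "\<Delta>0 = add_mset \<alpha> (add_mset \<alpha> K)" "E = add_mset (Disj f g) K" by auto
      then show "derivable n G (add_mset \<alpha> E)"
      proof cases
        case p
        have cf: "classical f" "classical g" using ca p by auto
        have "derivable m (G + {#}) (add_mset f (add_mset g E) + {#f, g#})"
          using RINV[OF R_disj(3), of \<alpha> "add_mset f (add_mset g E)" "{#}" "{#f, g#}"] p ca
          by (auto intro: rinv.intros simp: add_mset_commute)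
        then have "derivable m G (add_mset f (add_mset f (add_mset g (add_mset g E))))" by (simp add: add_mset_commute)
        from CR[OF mn cf(1) this] have "derivable m G (add_mset g (add_mset g (add_mset f E)))" by (simp add: add_mset_commute)
        from CR[OF mn cf(2) this] have "derivable m G (add_mset f (add_mset g E))" by (simp add: add_mset_commute)
        from dv_Rdisj[OF this] p R_disj show ?thesis by simp
      next
        case s
        have "derivable m G (add_mset \<alpha> (add_mset \<alpha> (add_mset f (add_mset g K))))" using dv_derh[OF R_disj(3)] s by (simp add: add_mset_commute)
        from CR[OF mn ca this] have "derivable m G (add_mset f (add_mset g (add_mset \<alpha> K)))" by (simp add: add_mset_commute)
        from dv_Rdisj[OF this] s R_disj show ?thesis by (simp add: add_mset_commute)
      qed
    qed
  next
    case (L_idisj m1 c f \<Gamma>0 m2 g)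
    have mn: "m1 < n" "m2 < n" using L_idisj by auto
    show ?thesis
    proof (intro conjI allI impI)
      fix \<nu> H assume hG: "G = add_mset \<nu> (add_mset \<nu> H)"
      from split2[of "plug c (IDisj f g)" \<Gamma>0 \<nu> H] hG L_idisj(2) consider (p) "\<nu> = plug c (IDisj f g)" "\<Gamma>0 = add_mset \<nu> H"
        | (s) K where "\<Gamma>0 = add_mset \<nu> (add_mset \<nu> K)" "H = add_mset (plug c (IDisj f g)) K" by auto
      then show "derivable n (add_mset \<nu> H) D"
      proof cases
        case p
        have "derivable m1 (add_mset (plug c f) H + {#plug c f#}) (D + {#})"
          using LINV[OF L_idisj(3), of \<nu> "add_mset (plug c f) H" "{#plug c f#}" "{#}"] p
          by (auto intro: linv.intros red_plugL simp: add_mset_commute)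
        then have 1: "derivable m1 (add_mset (plug c f) H) D" using CL[OF mn(1)] by simp
        have "derivable m2 (add_mset (plug c g) H + {#plug c g#}) (D + {#})"
          using LINV[OF L_idisj(4), of \<nu> "add_mset (plug c g) H" "{#plug c g#}" "{#}"] p
          by (auto intro: linv.intros red_plugR simp: add_mset_commute)
        then have 2: "derivable m2 (add_mset (plug c g) H) D" using CL[OF mn(2)] by simp
        from dv_Lidisj[OF 1 2] p L_idisj show ?thesis by simp
      next
        case s
        have 1: "derivable m1 (add_mset (plug c f) (add_mset \<nu> K)) D"
          using CL[OF mn(1), of \<nu> "add_mset (plug c f) K"] dv_derh[OF L_idisj(3)] s by (simp add: add_mset_commute)
        have 2: "derivable m2 (add_mset (plug c g) (add_mset \<nu> K)) D"
          using CL[OF mn(2), of \<nu> "add_mset (plug c g) K"] dv_derh[OF L_idisj(4)] s by (simp add: add_mset_commute)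
        from dv_Lidisj[OF 1 2] s L_idisj show ?thesis by (simp add: add_mset_commute)
      qed
    next
      fix \<alpha> E assume ca: "classical \<alpha>" and hD: "D = add_mset \<alpha> (add_mset \<alpha> E)"
      have 1: "derivable m1 (add_mset (plug c f) \<Gamma>0) (add_mset \<alpha> E)" using CR[OF mn(1) ca] dv_derh[OF L_idisj(3)] hD by simp
      have 2: "derivable m2 (add_mset (plug c g) \<Gamma>0) (add_mset \<alpha> E)" using CR[OF mn(2) ca] dv_derh[OF L_idisj(4)] hD by simp
      from dv_Lidisj[OF 1 2] L_idisj show "derivable n G (add_mset \<alpha> E)" by simp
    qed
  next
    case (R_idisjL m c f \<Delta>0 g)
    have mn: "m < n" using R_idisjL by simp
    show ?thesis
    proof (intro conjI allI impI)
      fix \<nu> H assume hG: "G = add_mset \<nu> (add_mset \<nu> H)"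
      have "derivable m (add_mset \<nu> H) (add_mset (plug c f) \<Delta>0)" using CL[OF mn] dv_derh[OF R_idisjL(3)] hG by simp
      from dv_RidisjL[OF this] R_idisjL show "derivable n (add_mset \<nu> H) D" by simp
    next
      fix \<alpha> E assume ca: "classical \<alpha>" and hD: "D = add_mset \<alpha> (add_mset \<alpha> E)"
      from split2[of "plug c (IDisj f g)" \<Delta>0 \<alpha> E] hD R_idisjL(2) ca plug_not_classical
      obtain K where s: "\<Delta>0 = add_mset \<alpha> (add_mset \<alpha> K)" "E = add_mset (plug c (IDisj f g)) K" by metis
      have "derivable m G (add_mset \<alpha> (add_mset \<alpha> (add_mset (plug c f) K)))" using dv_derh[OF R_idisjL(3)] s by (simp add: add_mset_commute)
      from CR[OF mn ca this] have "derivable m G (add_mset (plug c f) (add_mset \<alpha> K))" by (simp add: add_mset_commute)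
      from dv_RidisjL[OF this] s R_idisjL show "derivable n G (add_mset \<alpha> E)" by (simp add: add_mset_commute)
    qed
  next
    case (R_idisjR m c g \<Delta>0 f)
    have mn: "m < n" using R_idisjR by simp
    show ?thesis
    proof (intro conjI allI impI)
      fix \<nu> H assume hG: "G = add_mset \<nu> (add_mset \<nu> H)"
      have "derivable m (add_mset \<nu> H) (add_mset (plug c g) \<Delta>0)" using CL[OF mn] dv_derh[OF R_idisjR(3)] hG by simp
      from dv_RidisjR[OF this] R_idisjR show "derivable n (add_mset \<nu> H) D" by simp
    next
      fix \<alpha> E assume ca: "classical \<alpha>" and hD: "D = add_mset \<alpha> (add_mset \<alpha> E)"
      from split2[of "plug c (IDisj f g)" \<Delta>0 \<alpha> E] hD R_idisjR(2) ca plug_not_classical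
      obtain K where s: "\<Delta>0 = add_mset \<alpha> (add_mset \<alpha> K)" "E = add_mset (plug c (IDisj f g)) K" by metis
      have "derivable m G (add_mset \<alpha> (add_mset \<alpha> (add_mset (plug c g) K)))" using dv_derh[OF R_idisjR(3)] s by (simp add: add_mset_commute)
      from CR[OF mn ca this] have "derivable m G (add_mset (plug c g) (add_mset \<alpha> K))" by (simp add: add_mset_commute)
      from dv_RidisjR[OF this] s R_idisjR show "derivable n G (add_mset \<alpha> E)" by (simp add: add_mset_commute)
    qed
  qed
qed

theorem lemma4p3:
  fixes n :: nat and \<Gamma> \<Delta> :: "fm multiset" and \<nu> \<alpha> :: fm
  assumes "n \<ge> 1"
    and "\<forall>\<phi>\<in>#\<Gamma>. wff \<phi>" and "\<forall>\<phi>\<in>#\<Delta>. wff \<phi>"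
    and "wff \<nu>" and "classical \<alpha>"
  shows "(derivable n (\<Gamma> + {#\<nu>, \<nu>#}) \<Delta> \<longrightarrow> derivable n (\<Gamma> + {#\<nu>#}) \<Delta>) \<and>
         (derivable n \<Gamma> ({#\<alpha>, \<alpha>#} + \<Delta>) \<longrightarrow> derivable n \<Gamma> ({#\<alpha>#} + \<Delta>))"
proof (intro conjI impI)
  assume "derivable n (\<Gamma> + {#\<nu>, \<nu>#}) \<Delta>"
  then obtain m where m: "m \<le> n" "derh m (add_mset \<nu> (add_mset \<nu> \<Gamma>)) \<Delta>" unfolding derivable_def by auto
  from CONTR[OF m(2)] have "derivable m (add_mset \<nu> \<Gamma>) \<Delta>" by blast
  from dv_mono[OF this m(1)] show "derivable n (\<Gamma> + {#\<nu>#}) \<Delta>" by simp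
next
  assume "derivable n \<Gamma> ({#\<alpha>, \<alpha>#} + \<Delta>)"
  then obtain m where m: "m \<le> n" "derh m \<Gamma> (add_mset \<alpha> (add_mset \<alpha> \<Delta>))" unfolding derivable_def by auto
  from CONTR[OF m(2)] assms(5) have "derivable m \<Gamma> (add_mset \<alpha> \<Delta>)" by blast
  from dv_mono[OF this m(1)] show "derivable n \<Gamma> ({#\<alpha>#} + \<Delta>)" by simp
qed

end
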